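(* Let $p$ be a prime and let $(\mathcal G,\mathbf x)$ and $(\mathcal H,\mathbf y)$ be similar finite $p$-rigid multi-sorted relational structures, each with $r$ distinguished vertices. Then $(\mathcal G,\mathbf x)\cong(\mathcal H,\mathbf y)$ if and only if $$\mathrm{hom}((\mathcal K,\mathbf z),(\mathcal G,\mathbf x))\equiv\mathrm{hom}((\mathcal K,\mathbf z),(\mathcal H,\mathbf y))\pmod p$$ for every similar finite multi-sorted structure $(\mathcal K,\mathbf z)$ with $r$ distinguished vertices.
   Context: A multi-sorted structure with $r$ distinguished vertices $(\mathcal G,\mathbf x)$ is a multi-sorted structure $\mathcal G$ (pairwise disjoint sorts $G_1,\dots,G_k$, relations of fixed types) together with an $r$-tuple $\mathbf x=(x_1,\dots,x_r)$ of elements (possibly of different sorts, with a fixed sort pattern common to similar structures). Homomorphisms $(\mathcal K,\mathbf z)\to(\mathcal G,\mathbf x)$ are homomorphisms $\varphi=\{\varphi_i\}$ of multi-sorted structures (sort-preserving maps preserving all relations) with $\varphi(z_j)=x_j$ for all $j$; $\mathrm{hom}$ counts them; isomorphisms and automorphisms are defined accordingly. $(\mathcal G,\mathbf x)$ is $p$-rigid if it has no automorphism $\pi=\{\pi_i\}$ of order $p$ (each $\pi_i$ identity or of order $p$, not all identity) fixing all distinguished vertices. *)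

theory Defs
  imports Main "HOL-Library.FuncSet" "HOL-Computational_Algebra.Primes"
begin

text \<open>Signature: k sorts (indexed 0..k-1), relation symbols of type 'r, each with
  a fixed sort pattern ty R (a list of sort indices), and a sort pattern s
  for the r = length s distinguished vertices.\<close>

definition sig_wf :: "nat \<Rightarrow> ('r \<Rightarrow> nat list) \<Rightarrow> nat list \<Rightarrow> bool" where
  "sig_wf k ty s \<longleftrightarrow> (\<forall>R. \<forall>j\<in>set (ty R). j < k) \<and> (\<forall>j\<in>set s. j < k)"

record ('a, 'r) mstruct =
  sorts :: "nat \<Rightarrow> 'a set"
  rels  :: "'r \<Rightarrow> 'a list set"
  dist  :: "'a list"

definition univ :: "nat \<Rightarrow> ('a, 'r) mstruct \<Rightarrow> 'a set" where
  "univ k G = (\<Union>i<k. sorts G i)"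

definition ms_wf :: "nat \<Rightarrow> ('r \<Rightarrow> nat list) \<Rightarrow> nat list \<Rightarrow> ('a, 'r) mstruct \<Rightarrow> bool" where
  "ms_wf k ty s G \<longleftrightarrow>
     (\<forall>i<k. \<forall>j<k. i \<noteq> j \<longrightarrow> sorts G i \<inter> sorts G j = {}) \<and>
     (\<forall>R. \<forall>t\<in>rels G R. length t = length (ty R) \<and>
                         (\<forall>j<length t. t ! j \<in> sorts G (ty R ! j))) \<and>
     length (dist G) = length s \<and> (\<forall>j<length s. dist G ! j \<in> sorts G (s ! j))"

definition ms_finite :: "nat \<Rightarrow> ('a, 'r) mstruct \<Rightarrow> bool" where
  "ms_finite k G \<longleftrightarrow> (\<forall>i<k. finite (sorts G i))"

text \<open>Homomorphisms: a family of sort-preserving maps, represented as a single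
  map on the (disjoint) union of the sorts, preserving all relations and
  mapping distinguished vertices to distinguished vertices.\<close>

definition is_hom :: "nat \<Rightarrow> ('a, 'r) mstruct \<Rightarrow> ('b, 'r) mstruct \<Rightarrow> ('a \<Rightarrow> 'b) \<Rightarrow> bool" where
  "is_hom k K G f \<longleftrightarrow>
     (\<forall>i<k. \<forall>v\<in>sorts K i. f v \<in> sorts G i) \<and>
     (\<forall>R. \<forall>t\<in>rels K R. map f t \<in> rels G R) \<and>
     map f (dist K) = dist G"

definition hom_count :: "nat \<Rightarrow> ('a, 'r) mstruct \<Rightarrow> ('b, 'r) mstruct \<Rightarrow> nat" where
  "hom_count k K G = card {f. f \<in> extensional (univ k K) \<and> is_hom k K G f}"

definition is_iso :: "nat \<Rightarrow> ('a, 'r) mstruct \<Rightarrow> ('b, 'r) mstruct \<Rightarrow> ('a \<Rightarrow> 'b) \<Rightarrow> bool" where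
  "is_iso k G H f \<longleftrightarrow>
     (\<forall>i<k. bij_betw f (sorts G i) (sorts H i)) \<and>
     (\<forall>R. \<forall>t. set t \<subseteq> univ k G \<longrightarrow> (t \<in> rels G R \<longleftrightarrow> map f t \<in> rels H R)) \<and>
     map f (dist G) = dist H"

definition ms_iso :: "nat \<Rightarrow> ('a, 'r) mstruct \<Rightarrow> ('b, 'r) mstruct \<Rightarrow> bool" where
  "ms_iso k G H \<longleftrightarrow> (\<exists>f. is_iso k G H f)"

text \<open>p-rigid: no automorphism fixing the distinguished vertices whose components
  are each the identity or of order p, not all the identity. For prime p,
  a component has order 1 or p iff its p-th power is the identity.\<close>

definition p_rigid :: "nat \<Rightarrow> nat \<Rightarrow> ('a, 'r) mstruct \<Rightarrow> bool" where
  "p_rigid p k G \<longleftrightarrow> \<not> (\<exists>\<pi>. is_iso k G G \<pi> \<and>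
       (\<forall>i<k. \<forall>v\<in>sorts G i. (\<pi> ^^ p) v = v) \<and>
       (\<exists>i<k. \<exists>v\<in>sorts G i. \<pi> v \<noteq> v))"

end

theory Submission imports Defs "HOL-Algebra.Sylow" "HOL-Algebra.Bij" "HOL-Algebra.Multiplicative_Group" "HOL-Number_Theory.Cong"
begin

lemma rels_in_univ:
  assumes "sig_wf k ty s" "ms_wf k ty s K" "t \<in> rels K R"
  shows "set t \<subseteq> univ k K"
proof
  fix x assume "x \<in> set t"
  then obtain j where j: "j < length t" "t ! j = x" by (auto simp: in_set_conv_nth)
  have "length t = length (ty R)" "t ! j \<in> sorts K (ty R ! j)"
    using assms(2,3) j unfolding ms_wf_def by auto
  moreover have "ty R ! j < k" using assms(1) j \<open>length t = length (ty R)\<close>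
    unfolding sig_wf_def by (metis nth_mem)
  ultimately show "x \<in> univ k K" using j unfolding univ_def by auto
qed

lemma dist_in_univ:
  assumes "sig_wf k ty s" "ms_wf k ty s K"
  shows "set (mstruct.dist K) \<subseteq> univ k K"
proof
  fix x assume "x \<in> set (mstruct.dist K)"
  then obtain j where j: "j < length (mstruct.dist K)" "mstruct.dist K ! j = x" by (auto simp: in_set_conv_nth)
  have "length (mstruct.dist K) = length s" "mstruct.dist K ! j \<in> sorts K (s ! j)"
    using assms(2) j unfolding ms_wf_def by auto
  moreover have "s ! j < k" using assms(1) j \<open>length (mstruct.dist K) = length s\<close>
    unfolding sig_wf_def by (metis nth_mem)
  ultimately show "x \<in> univ k K" using j unfolding univ_def by auto
qed

lemma finite_univ: "ms_finite k K \<Longrightarrow> finite (univ k K)"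
  unfolding ms_finite_def univ_def by auto

lemma hom_univ: "is_hom k K G f \<Longrightarrow> v \<in> univ k K \<Longrightarrow> f v \<in> univ k G"
  unfolding is_hom_def univ_def by auto

lemma map_restrict_eq: "set t \<subseteq> A \<Longrightarrow> map (restrict f A) t = map f t"
  by (induct t) auto

lemma comp_hom:
  assumes "sig_wf k ty s" "ms_wf k ty s K" "is_hom k K G f" "is_hom k G H g"
  shows "is_hom k K H (restrict (g \<circ> f) (univ k K))"
  unfolding is_hom_def
proof (intro conjI allI ballI impI)
  fix i v assume "i < k" "v \<in> sorts K i"
  then show "restrict (g \<circ> f) (univ k K) v \<in> sorts H i"
    using assms(3,4) unfolding is_hom_def univ_def by auto
next
  fix R t assume "t \<in> rels K R"
  then have "set t \<subseteq> univ k K" by (rule rels_in_univ[OF assms(1,2)])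
  then show "map (restrict (g \<circ> f) (univ k K)) t \<in> rels H R"
    using assms(3,4) \<open>t \<in> rels K R\<close> unfolding is_hom_def
    by (simp add: map_restrict_eq) (metis map_map)
next
  have "set (mstruct.dist K) \<subseteq> univ k K" by (rule dist_in_univ[OF assms(1,2)])
  then show "map (restrict (g \<circ> f) (univ k K)) (mstruct.dist K) = mstruct.dist H"
    using assms(3,4) unfolding is_hom_def by (simp add: map_restrict_eq) (metis map_map)
qed

lemma iso_hom:
  assumes "sig_wf k ty s" "ms_wf k ty s G" "Defs.is_iso k G H f"
  shows "is_hom k G H f"
  unfolding is_hom_def
proof (intro conjI allI ballI impI)
  fix i v assume "i < k" "v \<in> sorts G i"
  then show "f v \<in> sorts H i" using assms(3) unfolding Defs.is_iso_def bij_betw_def by auto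
next
  fix R t assume "t \<in> rels G R"
  then show "map f t \<in> rels H R" using assms(3) rels_in_univ[OF assms(1,2)]
    unfolding Defs.is_iso_def by blast
next
  show "map f (mstruct.dist G) = mstruct.dist H" using assms(3) unfolding Defs.is_iso_def by blast
qed

lemma iso_image_univ:
  assumes "Defs.is_iso k G H f"
  shows "f ` univ k G = univ k H"
  using assms unfolding Defs.is_iso_def univ_def bij_betw_def by (auto simp: image_UN)

lemma iso_inj_univ:
  assumes "ms_wf k ty s H" "Defs.is_iso k G H f"
  shows "inj_on f (univ k G)"
proof (rule inj_onI)
  fix u v assume u: "u \<in> univ k G" and v: "v \<in> univ k G" and eq: "f u = f v"
  from u obtain i where i: "i < k" "u \<in> sorts G i" unfolding univ_def by auto
  from v obtain j where j: "j < k" "v \<in> sorts G j" unfolding univ_def by auto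
  have "f u \<in> sorts H i" "f v \<in> sorts H j" using assms(2) i j unfolding Defs.is_iso_def bij_betw_def by auto
  then have "i = j" using assms(1) i j eq unfolding ms_wf_def by auto
  then show "u = v" using assms(2) i j eq unfolding Defs.is_iso_def bij_betw_def inj_on_def by auto
qed

lemma iso_inv:
  assumes "sig_wf k ty s" "ms_wf k ty s G" "ms_wf k ty s H" "Defs.is_iso k G H f"
  shows "Defs.is_iso k H G (\<lambda>w\<in>univ k H. inv_into (univ k G) f w)"
proof -
  define \<psi> where "\<psi> = (\<lambda>w\<in>univ k H. inv_into (univ k G) f w)"
  have inj: "inj_on f (univ k G)" by (rule iso_inj_univ[OF assms(3,4)])
  have img: "f ` univ k G = univ k H" by (rule iso_image_univ[OF assms(4)])
  have psi_f: "\<psi> (f v) = v" if v: "v \<in> univ k G" for v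
  proof -
    have "f v \<in> univ k H" using v img by blast
    then have "\<psi> (f v) = inv_into (univ k G) f (f v)" unfolding \<psi>_def by simp
    then show ?thesis using inv_into_f_f[OF inj v] by simp
  qed
  have f_psi: "f (\<psi> w) = w" if "w \<in> univ k H" for w
    using that img unfolding \<psi>_def by (auto simp: f_inv_into_f)
  have psi_univ: "\<psi> w \<in> univ k G" if "w \<in> univ k H" for w
    using that img unfolding \<psi>_def by (auto simp: inv_into_into)
  show ?thesis
    unfolding Defs.is_iso_def \<psi>_def[symmetric]
  proof (intro conjI allI impI)
    fix i assume i: "i < k"
    have b: "bij_betw f (sorts G i) (sorts H i)" using assms(4) i unfolding Defs.is_iso_def by auto
    have "bij_betw (inv_into (sorts G i) f) (sorts H i) (sorts G i)" by (rule bij_betw_inv_into[OF b])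
    moreover have "\<psi> w = inv_into (sorts G i) f w" if w: "w \<in> sorts H i" for w
    proof -
      obtain v where v: "v \<in> sorts G i" "w = f v" using b w unfolding bij_betw_def by auto
      have "v \<in> univ k G" using v i unfolding univ_def by auto
      then show ?thesis using v b psi_f unfolding bij_betw_def by auto
    qed
    ultimately show "bij_betw \<psi> (sorts H i) (sorts G i)" using bij_betw_cong by blast
  next
    fix R t assume t: "set t \<subseteq> univ k H"
    have t1: "map f (map \<psi> t) = t" using t f_psi by (induct t) auto
    have t2: "set (map \<psi> t) \<subseteq> univ k G" using t psi_univ by auto
    have "(map \<psi> t \<in> rels G R) = (map f (map \<psi> t) \<in> rels H R)"
      using assms(4) t2 unfolding Defs.is_iso_def by blast
    then show "(t \<in> rels H R) = (map \<psi> t \<in> rels G R)" using t1 by simp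
  next
    have d: "set (mstruct.dist G) \<subseteq> univ k G" by (rule dist_in_univ[OF assms(1,2)])
    have "map \<psi> (map f (mstruct.dist G)) = mstruct.dist G" using d psi_f by (auto intro!: map_idI)
    then show "map \<psi> (mstruct.dist H) = mstruct.dist G" using assms(4) unfolding Defs.is_iso_def by simp
  qed
qed

lemma inj_both_surj:
  assumes "finite A" "finite B" "inj_on f A" "f ` A \<subseteq> B" "inj_on g B" "g ` B \<subseteq> A"
  shows "f ` A = B"
proof -
  have "card A \<le> card B" using card_inj_on_le[OF assms(3) _ assms(2)] assms(4) by (simp add: image_subset_iff_funcset)
  moreover have "card B \<le> card A" using card_inj_on_le[OF assms(5) _ assms(1)] assms(6) by (simp add: image_subset_iff_funcset)
  ultimately have "card (f ` A) = card B" using assms(3) by (simp add: card_image)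
  then show ?thesis using assms(2,4) card_subset_eq by blast
qed

lemma finite_rels:
  assumes "sig_wf k ty s" "ms_wf k ty s G" "ms_finite k G"
  shows "finite (rels G R)"
proof -
  have "rels G R \<subseteq> {xs. set xs \<subseteq> univ k G \<and> length xs \<le> length (ty R)}"
  proof
    fix t assume t: "t \<in> rels G R"
    have "length t = length (ty R)" using assms(2) t unfolding ms_wf_def by blast
    then show "t \<in> {xs. set xs \<subseteq> univ k G \<and> length xs \<le> length (ty R)}"
      using rels_in_univ[OF assms(1,2) t] by simp
  qed
  moreover have "finite {xs. set xs \<subseteq> univ k G \<and> length xs \<le> length (ty R)}"
    using finite_lists_length_le finite_univ[OF assms(3)] by blast
  ultimately show ?thesis using finite_subset by blast
qed

lemma both_inj_iso:
  assumes "sig_wf k ty s" "ms_wf k ty s G" "ms_wf k ty s H" "ms_finite k G" "ms_finite k H"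
    and f: "is_hom k G H f" "inj_on f (univ k G)"
    and g: "is_hom k H G g" "inj_on g (univ k H)"
  shows "Defs.is_iso k G H f"
  unfolding Defs.is_iso_def
proof (intro conjI allI impI)
  fix i assume i: "i < k"
  have sG: "sorts G i \<subseteq> univ k G" "sorts H i \<subseteq> univ k H" using i unfolding univ_def by auto
  have "f ` sorts G i = sorts H i"
  proof (rule inj_both_surj)
    show "finite (sorts G i)" "finite (sorts H i)" using assms(4,5) i unfolding ms_finite_def by auto
    show "inj_on f (sorts G i)" by (rule inj_on_subset[OF f(2) sG(1)])
    show "inj_on g (sorts H i)" by (rule inj_on_subset[OF g(2) sG(2)])
    show "f ` sorts G i \<subseteq> sorts H i" using f(1) i unfolding is_hom_def by blast
    show "g ` sorts H i \<subseteq> sorts G i" using g(1) i unfolding is_hom_def by blast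
  qed
  then show "bij_betw f (sorts G i) (sorts H i)"
    using inj_on_subset[OF f(2) sG(1)] unfolding bij_betw_def by blast
next
  fix R t assume t: "set t \<subseteq> univ k G"
  have lf: "inj_on (map f) (lists (univ k G))" by (rule inj_on_map_lists[OF f(2)])
  have lg: "inj_on (map g) (lists (univ k H))" by (rule inj_on_map_lists[OF g(2)])
  have AG: "rels G R \<subseteq> lists (univ k G)" using rels_in_univ[OF assms(1,2)] by blast
  have AH: "rels H R \<subseteq> lists (univ k H)" using rels_in_univ[OF assms(1,3)] by blast
  have eq: "map f ` rels G R = rels H R"
  proof (rule inj_both_surj)
    show "finite (rels G R)" by (rule finite_rels[OF assms(1,2,4)])
    show "finite (rels H R)" by (rule finite_rels[OF assms(1,3,5)])
    show "inj_on (map f) (rels G R)" by (rule inj_on_subset[OF lf AG])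
    show "inj_on (map g) (rels H R)" by (rule inj_on_subset[OF lg AH])
    show "map f ` rels G R \<subseteq> rels H R" using f(1) unfolding is_hom_def by blast
    show "map g ` rels H R \<subseteq> rels G R" using g(1) unfolding is_hom_def by blast
  qed
  show "(t \<in> rels G R) = (map f t \<in> rels H R)"
  proof
    assume "t \<in> rels G R" then show "map f t \<in> rels H R" using eq by blast
  next
    assume "map f t \<in> rels H R"
    then have "map f t \<in> map f ` rels G R" using eq by simp
    then obtain t' where t': "t' \<in> rels G R" "map f t' = map f t" by (metis imageE)
    have "t \<in> lists (univ k G)" "t' \<in> lists (univ k G)" using t AG t'(1) by auto
    then have "t' = t" using inj_onD[OF lf t'(2)] by simp
    then show "t \<in> rels G R" using t' by simp
  qed
next
  show "map f (mstruct.dist G) = mstruct.dist H" using f(1) unfolding is_hom_def by simp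
qed

definition inj_set :: "nat \<Rightarrow> ('a, 'r) mstruct \<Rightarrow> ('b, 'r) mstruct \<Rightarrow> ('a \<Rightarrow> 'b) set" where
  "inj_set k K G = {f. f \<in> extensional (univ k K) \<and> is_hom k K G f \<and> inj_on f (univ k K)}"

definition hom_set :: "nat \<Rightarrow> ('a, 'r) mstruct \<Rightarrow> ('b, 'r) mstruct \<Rightarrow> ('a \<Rightarrow> 'b) set" where
  "hom_set k K G = {f. f \<in> extensional (univ k K) \<and> is_hom k K G f}"

lemma hom_set_finite:
  assumes "ms_finite k K" "ms_finite k G"
  shows "finite (hom_set k K G)"
proof -
  have "hom_set k K G \<subseteq> PiE (univ k K) (\<lambda>_. univ k G)"
    unfolding hom_set_def using hom_univ by (auto simp: PiE_def Pi_def)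
  then show ?thesis using finite_PiE finite_univ assms finite_subset by metis
qed

lemma inj_set_finite:
  assumes "ms_finite k K" "ms_finite k G"
  shows "finite (inj_set k K G)"
  using hom_set_finite[OF assms] unfolding inj_set_def hom_set_def
  by (rule finite_subset[rotated]) auto

lemma comp_inj:
  assumes "inj_on f A" "f ` A \<subseteq> B" "inj_on g B"
  shows "inj_on (restrict (g \<circ> f) A) A"
proof -
  have "inj_on (g \<circ> f) A" using assms comp_inj_on inj_on_subset by blast
  then show ?thesis by (simp add: inj_on_def)
qed

lemma post_iso_le:
  fixes K :: "('c, 'r) mstruct" and G :: "('a, 'r) mstruct" and H :: "('b, 'r) mstruct"
  assumes "sig_wf k ty s" "ms_wf k ty s K" "ms_finite k K" "ms_wf k ty s G" "ms_wf k ty s H"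
    "ms_finite k H" "Defs.is_iso k G H \<phi>"
  shows "card (hom_set k K G) \<le> card (hom_set k K H)"
proof -
  define \<Phi> :: "('c \<Rightarrow> 'a) \<Rightarrow> 'c \<Rightarrow> 'b" where "\<Phi> = (\<lambda>f. restrict (\<phi> \<circ> f) (univ k K))"
  have ph: "is_hom k G H \<phi>" by (rule iso_hom[OF assms(1,4,7)])
  have inj: "inj_on \<phi> (univ k G)" by (rule iso_inj_univ[OF assms(5,7)])
  show ?thesis
  proof (rule card_inj_on_le[where f=\<Phi>])
  show "\<Phi> ` hom_set k K G \<subseteq> hom_set k K H"
    unfolding \<Phi>_def hom_set_def using comp_hom[OF assms(1,2) _ ph] by auto
  show "inj_on \<Phi> (hom_set k K G)"
  proof (rule inj_onI)
    fix f f' assume f: "f \<in> hom_set k K G" and f': "f' \<in> hom_set k K G" and eq: "\<Phi> f = \<Phi> f'"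
    show "f = f'"
    proof (rule extensionalityI)
      show "f \<in> extensional (univ k K)" "f' \<in> extensional (univ k K)" using f f' unfolding hom_set_def by auto
      fix v assume v: "v \<in> univ k K"
      have "\<phi> (f v) = \<phi> (f' v)" using fun_cong[OF eq, of v] v unfolding \<Phi>_def by simp
      moreover have "f v \<in> univ k G" "f' v \<in> univ k G" using f f' v hom_univ unfolding hom_set_def by auto
      ultimately show "f v = f' v" using inj by (meson inj_onD)
    qed
  qed
  show "finite (hom_set k K H)" by (rule hom_set_finite[OF assms(3,6)])
  qed
qed

lemma iso_hom_count_eq:
  assumes "sig_wf k ty s" "ms_wf k ty s K" "ms_finite k K" "ms_wf k ty s G" "ms_wf k ty s H"
    "ms_finite k G" "ms_finite k H" "Defs.is_iso k G H \<phi>"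
  shows "hom_count k K G = hom_count k K H"
proof -
  have "card (hom_set k K G) \<le> card (hom_set k K H)" by (rule post_iso_le[OF assms(1-5,7,8)])
  moreover have "card (hom_set k K H) \<le> card (hom_set k K G)"
    by (rule post_iso_le[OF assms(1-3,5,4,6) iso_inv[OF assms(1,4,5,8)]])
  ultimately show ?thesis unfolding hom_count_def hom_set_def by simp
qed

lemma pre_iso_le:
  fixes A :: "('a, 'r) mstruct" and B :: "('b, 'r) mstruct" and X :: "('c, 'r) mstruct"
  assumes "sig_wf k ty s" "ms_wf k ty s A" "ms_wf k ty s B" "ms_finite k A" "ms_finite k X"
    "Defs.is_iso k A B \<phi>"
  shows "card (inj_set k B X) \<le> card (inj_set k A X)"
proof -
  define \<Phi> :: "('b \<Rightarrow> 'c) \<Rightarrow> 'a \<Rightarrow> 'c" where "\<Phi> = (\<lambda>g. restrict (g \<circ> \<phi>) (univ k A))"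
  have ph: "is_hom k A B \<phi>" by (rule iso_hom[OF assms(1,2,6)])
  have inj: "inj_on \<phi> (univ k A)" by (rule iso_inj_univ[OF assms(3,6)])
  have img: "\<phi> ` univ k A = univ k B" by (rule iso_image_univ[OF assms(6)])
  show ?thesis
  proof (rule card_inj_on_le[where f=\<Phi>])
  show "\<Phi> ` inj_set k B X \<subseteq> inj_set k A X"
  proof (rule image_subsetI)
    fix g assume g: "g \<in> inj_set k B X"
    have "is_hom k A X (\<Phi> g)" unfolding \<Phi>_def using comp_hom[OF assms(1,2) ph] g unfolding inj_set_def by auto
    moreover have "inj_on (\<Phi> g) (univ k A)" unfolding \<Phi>_def
      using comp_inj[OF inj _, of "univ k B" g] img g unfolding inj_set_def by auto
    ultimately show "\<Phi> g \<in> inj_set k A X" unfolding inj_set_def \<Phi>_def by auto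
  qed
  show "inj_on \<Phi> (inj_set k B X)"
  proof (rule inj_onI)
    fix g g' assume g: "g \<in> inj_set k B X" and g': "g' \<in> inj_set k B X" and eq: "\<Phi> g = \<Phi> g'"
    show "g = g'"
    proof (rule extensionalityI)
      show "g \<in> extensional (univ k B)" "g' \<in> extensional (univ k B)" using g g' unfolding inj_set_def by auto
      fix w assume "w \<in> univ k B"
      then obtain v where v: "v \<in> univ k A" "w = \<phi> v" using img by blast
      show "g w = g' w" using fun_cong[OF eq, of v] v unfolding \<Phi>_def by simp
    qed
  qed
  show "finite (inj_set k A X)" by (rule inj_set_finite[OF assms(4,5)])
  qed
qed

lemma iso_inj_count_eq:
  assumes "sig_wf k ty s" "ms_wf k ty s A" "ms_wf k ty s B" "ms_finite k A" "ms_finite k B"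
    "ms_finite k X" "Defs.is_iso k A B \<phi>"
  shows "card (inj_set k A X) = card (inj_set k B X)"
proof -
  have "card (inj_set k B X) \<le> card (inj_set k A X)" by (rule pre_iso_le[OF assms(1-4,6,7)])
  moreover have "card (inj_set k A X) \<le> card (inj_set k B X)"
    by (rule pre_iso_le[OF assms(1,3,2,5,6) iso_inv[OF assms(1,2,3,7)]])
  ultimately show ?thesis by simp
qed

lemma nat_copy:
  fixes A :: "('a, 'r) mstruct"
  assumes "sig_wf k ty s" "ms_wf k ty s A" "ms_finite k A"
  shows "\<exists>(A' :: (nat, 'r) mstruct) \<phi>. ms_wf k ty s A' \<and> ms_finite k A' \<and> Defs.is_iso k A' A \<phi>"
proof -
  define n where "n = card (univ k A)"
  obtain h where h: "bij_betw h {0..<n} (univ k A)"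
    using ex_bij_betw_nat_finite[OF finite_univ[OF assms(3)]] unfolding n_def by blast
  define h' where "h' = inv_into {0..<n} h"
  have hinj: "inj_on h {0..<n}" and himg: "h ` {0..<n} = univ k A" using h unfolding bij_betw_def by auto
  have hh': "h (h' x) = x" if "x \<in> univ k A" for x
    using that himg unfolding h'_def by (metis f_inv_into_f)
  have h'in: "h' x \<in> {0..<n}" if "x \<in> univ k A" for x
    using that himg unfolding h'_def by (metis inv_into_into)
  define A' :: "(nat, 'r) mstruct" where "A' = \<lparr>sorts = (\<lambda>i. {x \<in> {0..<n}. h x \<in> sorts A i}),
      rels = (\<lambda>R. {t. set t \<subseteq> {0..<n} \<and> map h t \<in> rels A R}),
      dist = map h' (mstruct.dist A)\<rparr>"
  have dA: "set (mstruct.dist A) \<subseteq> univ k A" by (rule dist_in_univ[OF assms(1,2)])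
  have wf: "ms_wf k ty s A'"
    unfolding ms_wf_def
  proof (intro conjI allI impI ballI)
    fix i j assume "i < k" "j < k" "i \<noteq> j"
    then have "sorts A i \<inter> sorts A j = {}" using assms(2) unfolding ms_wf_def by blast
    then show "sorts A' i \<inter> sorts A' j = {}" unfolding A'_def by auto
  next
    fix R t assume t: "t \<in> rels A' R"
    then have t1: "set t \<subseteq> {0..<n}" "map h t \<in> rels A R" unfolding A'_def by auto
    have l: "length (map h t) = length (ty R)" and el: "\<forall>j<length (map h t). map h t ! j \<in> sorts A (ty R ! j)"
      using assms(2) t1(2) unfolding ms_wf_def by blast+
    show "length t = length (ty R)" using l by simp
  next
    fix R t j assume t: "t \<in> rels A' R" and j: "j < length t"
    then have t1: "set t \<subseteq> {0..<n}" "map h t \<in> rels A R" unfolding A'_def by auto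
    have el: "\<forall>j<length (map h t). map h t ! j \<in> sorts A (ty R ! j)"
      using assms(2) t1(2) unfolding ms_wf_def by blast
    have "t ! j \<in> {0..<n}" using t1(1) j nth_mem by blast
    moreover have "h (t ! j) \<in> sorts A (ty R ! j)" using el j by simp
    ultimately show "t ! j \<in> sorts A' (ty R ! j)" unfolding A'_def by simp
  next
    show "length (mstruct.dist A') = length s" using assms(2) unfolding A'_def ms_wf_def by simp
  next
    fix j assume j: "j < length s"
    have j': "j < length (mstruct.dist A)" using j assms(2) unfolding ms_wf_def by simp
    have x: "mstruct.dist A ! j \<in> univ k A" using dA j' nth_mem by blast
    have "mstruct.dist A ! j \<in> sorts A (s ! j)" using j assms(2) unfolding ms_wf_def by blast
    then show "mstruct.dist A' ! j \<in> sorts A' (s ! j)"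
      unfolding A'_def using j' hh'[OF x] h'in[OF x] by simp
  qed
  have fin: "ms_finite k A'" unfolding ms_finite_def A'_def by auto
  have iso: "Defs.is_iso k A' A h"
    unfolding Defs.is_iso_def
  proof (intro conjI allI impI)
    fix i assume i: "i < k"
    have sub: "sorts A' i \<subseteq> {0..<n}" unfolding A'_def by auto
    have "h ` sorts A' i = sorts A i"
    proof
      show "h ` sorts A' i \<subseteq> sorts A i" unfolding A'_def by auto
      show "sorts A i \<subseteq> h ` sorts A' i"
      proof
        fix v assume v: "v \<in> sorts A i"
        then have "v \<in> univ k A" using i unfolding univ_def by auto
        then obtain x where "x \<in> {0..<n}" "v = h x" using himg by blast
        then show "v \<in> h ` sorts A' i" using v unfolding A'_def by auto
      qed
    qed
    then show "bij_betw h (sorts A' i) (sorts A i)" using inj_on_subset[OF hinj sub] unfolding bij_betw_def by blast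
  next
    fix R t assume t: "set t \<subseteq> univ k A'"
    have "univ k A' \<subseteq> {0..<n}" unfolding univ_def A'_def by auto
    then show "(t \<in> rels A' R) = (map h t \<in> rels A R)" using t unfolding A'_def by auto
  next
    show "map h (mstruct.dist A') = mstruct.dist A" unfolding A'_def using dA hh' by (auto intro!: map_idI)
  qed
  show ?thesis using wf fin iso by blast
qed

definition reps :: "nat \<Rightarrow> (nat, 'r) mstruct \<Rightarrow> (nat \<Rightarrow> nat) set" where
  "reps k K = {e. e \<in> extensional (univ k K) \<and> (\<forall>i<k. \<forall>v\<in>sorts K i. e v \<in> sorts K i) \<and>
     (\<forall>v\<in>univ k K. e v = (LEAST u. u \<in> univ k K \<and> e u = e v))}"

definition quot :: "(nat, 'r) mstruct \<Rightarrow> (nat \<Rightarrow> nat) \<Rightarrow> (nat, 'r) mstruct" where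
  "quot K e = \<lparr>sorts = (\<lambda>i. e ` sorts K i), rels = (\<lambda>R. map e ` rels K R),
     dist = map e (mstruct.dist K)\<rparr>"

lemma quot_simps [simp]:
  "sorts (quot K e) i = e ` sorts K i" "rels (quot K e) R = map e ` rels K R"
  "mstruct.dist (quot K e) = map e (mstruct.dist K)"
  unfolding quot_def by simp_all

lemma univ_quot: "univ k (quot K e) = e ` univ k K"
  unfolding univ_def by (simp add: image_UN)

lemma reps_idem:
  assumes "e \<in> reps k K" "v \<in> univ k K"
  shows "e v \<in> univ k K \<and> e (e v) = e v"
proof -
  have eq: "e v = (LEAST u. u \<in> univ k K \<and> e u = e v)" using assms unfolding reps_def by blast
  have "(LEAST u. u \<in> univ k K \<and> e u = e v) \<in> univ k K \<and> e (LEAST u. u \<in> univ k K \<and> e u = e v) = e v"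
    by (rule LeastI[of "\<lambda>u. u \<in> univ k K \<and> e u = e v" v]) (use assms(2) in simp)
  then show ?thesis using eq by simp
qed

lemma quot_wf:
  assumes "ms_wf k ty s K" "e \<in> reps k K"
  shows "ms_wf k ty s (quot K e)"
  unfolding ms_wf_def
proof (intro conjI allI impI ballI)
  fix i j assume ij: "i < k" "j < k" "i \<noteq> j"
  have "e ` sorts K i \<subseteq> sorts K i" "e ` sorts K j \<subseteq> sorts K j" using assms(2) ij unfolding reps_def by auto
  moreover have "sorts K i \<inter> sorts K j = {}" using assms(1) ij unfolding ms_wf_def by blast
  ultimately show "sorts (quot K e) i \<inter> sorts (quot K e) j = {}" by auto
next
  fix R t' assume "t' \<in> rels (quot K e) R"
  then obtain t where t: "t \<in> rels K R" "t' = map e t" by auto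
  have "length t = length (ty R)"
    using assms(1) t(1) unfolding ms_wf_def by blast
  then show "length t' = length (ty R)" using t(2) by auto
next
  fix R t' j assume "t' \<in> rels (quot K e) R" "j < length t'"
  then obtain t where t: "t \<in> rels K R" "t' = map e t" "j < length t" by auto
  have "\<forall>j<length t. t ! j \<in> sorts K (ty R ! j)"
    using assms(1) t(1) unfolding ms_wf_def by blast
  then show "t' ! j \<in> sorts (quot K e) (ty R ! j)" using t(2,3) by auto
next
  show "length (mstruct.dist (quot K e)) = length s" using assms(1) unfolding ms_wf_def by simp
next
  fix j assume "j < length s"
  then show "mstruct.dist (quot K e) ! j \<in> sorts (quot K e) (s ! j)"
    using assms(1) unfolding ms_wf_def by auto
qed

lemma quot_finite: "ms_finite k K \<Longrightarrow> ms_finite k (quot K e)"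
  unfolding ms_finite_def by simp

lemma id_reps: "restrict id (univ k K) \<in> reps k K"
  unfolding reps_def
proof (intro CollectI conjI allI impI ballI)
  show "restrict id (univ k K) \<in> extensional (univ k K)" by simp
next
  fix i v assume "i < k" "v \<in> sorts K i"
  then show "restrict id (univ k K) v \<in> sorts K i" unfolding univ_def by auto
next
  fix v assume v: "v \<in> univ k K"
  have "(LEAST u. u \<in> univ k K \<and> restrict id (univ k K) u = restrict id (univ k K) v) = v"
    by (rule Least_equality) (use v in auto)
  then show "restrict id (univ k K) v = (LEAST u. u \<in> univ k K \<and> restrict id (univ k K) u = restrict id (univ k K) v)"
    using v by simp
qed

lemma hom_quot_id:
  assumes "sig_wf k ty s" "ms_wf k ty s K"
  shows "is_hom k (quot K (restrict id (univ k K))) G f = is_hom k K G f"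
proof -
  let ?e = "restrict id (univ k K)"
  have s: "sorts (quot K ?e) i = sorts K i" if "i < k" for i
  proof -
    have "sorts K i \<subseteq> univ k K" using that unfolding univ_def by auto
    then show ?thesis by (auto simp: image_iff)
  qed
  have r: "rels (quot K ?e) R = rels K R" for R
  proof -
    have "map ?e t = t" if "t \<in> rels K R" for t
      using rels_in_univ[OF assms that] by (auto intro!: map_idI)
    then show ?thesis by (auto simp: image_iff)
  qed
  have d: "mstruct.dist (quot K ?e) = mstruct.dist K"
    using dist_in_univ[OF assms] by (auto intro!: map_idI)
  show ?thesis unfolding is_hom_def using s r d by simp
qed

lemma inj_set_quot_id:
  assumes "sig_wf k ty s" "ms_wf k ty s K"
  shows "inj_set k (quot K (restrict id (univ k K))) G = inj_set k K G"
proof -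
  have "univ k (quot K (restrict id (univ k K))) = univ k K" unfolding univ_quot by auto
  then show ?thesis unfolding inj_set_def using hom_quot_id[OF assms, of G] by simp
qed

lemma quot_smaller:
  assumes "ms_finite k K" "e \<in> reps k K" "e \<noteq> restrict id (univ k K)"
  shows "card (univ k (quot K e)) < card (univ k K)"
proof -
  have "\<exists>v\<in>univ k K. e v \<noteq> v"
  proof (rule ccontr)
    assume "\<not> ?thesis"
    then have "e = restrict id (univ k K)"
      using assms(2) unfolding reps_def by (intro extensionalityI[of _ "univ k K"]) auto
    then show False using assms(3) by simp
  qed
  then obtain v where v: "v \<in> univ k K" "e v \<noteq> v" by blast
  have ev: "e v \<in> univ k K" "e (e v) = e v" using reps_idem[OF assms(2) v(1)] by auto
  have ninj: "\<not> inj_on e (univ k K)"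
    using v ev by (metis inj_onD)
  have fin: "finite (univ k K)" by (rule finite_univ[OF assms(1)])
  have "card (e ` univ k K) \<le> card (univ k K)" by (rule card_image_le[OF fin])
  moreover have "card (e ` univ k K) \<noteq> card (univ k K)"
    using eq_card_imp_inj_on[OF fin] ninj by blast
  ultimately show ?thesis unfolding univ_quot by simp
qed

definition ker :: "nat \<Rightarrow> (nat, 'r) mstruct \<Rightarrow> (nat \<Rightarrow> 'b) \<Rightarrow> nat \<Rightarrow> nat" where
  "ker k K f = (\<lambda>v\<in>univ k K. LEAST u. u \<in> univ k K \<and> f u = f v)"

lemma hom_to_quot: "is_hom k K (quot K e) e"
  unfolding is_hom_def by auto

lemma decomp_kernel:
  assumes e: "e \<in> reps k K" and g: "g \<in> inj_set k (quot K e) G"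
  shows "ker k K (restrict (g \<circ> e) (univ k K)) = e"
    and "restrict (restrict (g \<circ> e) (univ k K)) (e ` univ k K) = g"
proof -
  let ?U = "univ k K"
  let ?f = "restrict (g \<circ> e) ?U"
  have ginj: "inj_on g (e ` ?U)" using g unfolding inj_set_def univ_quot by blast
  have gext: "g \<in> extensional (e ` ?U)" using g unfolding inj_set_def univ_quot by blast
  have eext: "e \<in> extensional ?U" using e unfolding reps_def by blast
  show "ker k K ?f = e"
  proof (rule extensionalityI[of _ ?U])
    show "ker k K ?f \<in> extensional ?U" unfolding ker_def by simp
    show "e \<in> extensional ?U" by (rule eext)
    fix v assume v: "v \<in> ?U"
    have "(\<lambda>u. u \<in> ?U \<and> ?f u = ?f v) = (\<lambda>u. u \<in> ?U \<and> e u = e v)"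
    proof (rule ext)
      fix u
      show "(u \<in> ?U \<and> ?f u = ?f v) = (u \<in> ?U \<and> e u = e v)"
      proof (cases "u \<in> ?U")
        case True
        have "e u \<in> e ` ?U" "e v \<in> e ` ?U" using True v by auto
        then have "g (e u) = g (e v) \<longleftrightarrow> e u = e v"
          using inj_on_eq_iff[OF ginj] by blast
        then show ?thesis using True v by simp
      qed simp
    qed
    then show "ker k K ?f v = e v" using v e unfolding ker_def reps_def by simp
  qed
  show "restrict ?f (e ` ?U) = g"
  proof (rule extensionalityI[of _ "e ` ?U"])
    show "restrict ?f (e ` ?U) \<in> extensional (e ` ?U)" by (rule restrict_extensional)
    show "g \<in> extensional (e ` ?U)" by (rule gext)
    fix w assume "w \<in> e ` ?U"
    then obtain v where v: "v \<in> ?U" "w = e v" by blast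
    have "e v \<in> ?U" "e (e v) = e v" using reps_idem[OF e v(1)] by auto
    then show "restrict ?f (e ` ?U) w = g w" using v by simp
  qed
qed

lemma decomp_surj:
  assumes "sig_wf k ty s" "ms_wf k ty s K" "ms_wf k ty s G" and f: "f \<in> hom_set k K G"
  shows "ker k K f \<in> reps k K" and "restrict f (ker k K f ` univ k K) \<in> inj_set k (quot K (ker k K f)) G"
    and "restrict (restrict f (ker k K f ` univ k K) \<circ> ker k K f) (univ k K) = f"
proof -
  let ?U = "univ k K"
  define e where "e = ker k K f"
  have fh: "is_hom k K G f" and fext: "f \<in> extensional ?U" using f unfolding hom_set_def by auto
  have L: "e v \<in> ?U \<and> f (e v) = f v" if v: "v \<in> ?U" for v
  proof -
    have "(LEAST u. u \<in> ?U \<and> f u = f v) \<in> ?U \<and> f (LEAST u. u \<in> ?U \<and> f u = f v) = f v"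
      by (rule LeastI[of "\<lambda>u. u \<in> ?U \<and> f u = f v" v]) (use v in simp)
    then show ?thesis using v unfolding e_def ker_def by simp
  qed
  have eq_iff: "e u = e v \<longleftrightarrow> f u = f v" if "u \<in> ?U" "v \<in> ?U" for u v
  proof
    assume "e u = e v" then show "f u = f v" using L that by metis
  next
    assume "f u = f v"
    then show "e u = e v" using that unfolding e_def ker_def by simp
  qed
  show er: "ker k K f \<in> reps k K"
    unfolding reps_def e_def[symmetric]
  proof (intro CollectI conjI allI impI ballI)
    show "e \<in> extensional ?U" unfolding e_def ker_def by simp
  next
    fix i v assume i: "i < k" and v: "v \<in> sorts K i"
    have vU: "v \<in> ?U" using i v unfolding univ_def by auto
    then obtain j where j: "j < k" "e v \<in> sorts K j" using L unfolding univ_def by auto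
    have "f (e v) \<in> sorts G j" "f v \<in> sorts G i" using fh i j v unfolding is_hom_def by auto
    then have "i = j" using L[OF vU] assms(3) i j unfolding ms_wf_def by auto
    then show "e v \<in> sorts K i" using j by simp
  next
    fix v assume v: "v \<in> ?U"
    have "(\<lambda>u. u \<in> ?U \<and> e u = e v) = (\<lambda>u. u \<in> ?U \<and> f u = f v)"
      using eq_iff v by auto
    then show "e v = (LEAST u. u \<in> ?U \<and> e u = e v)" using v unfolding e_def ker_def by simp
  qed
  define g where "g = restrict f (e ` ?U)"
  have ge: "g (e v) = f v" if "v \<in> ?U" for v using L that unfolding g_def by auto
  have mg: "map g (map e t) = map f t" if "set t \<subseteq> ?U" for t
    using that ge by (induct t) auto
  show "restrict f (ker k K f ` univ k K) \<in> inj_set k (quot K (ker k K f)) G"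
    unfolding e_def[symmetric] g_def[symmetric] inj_set_def univ_quot
  proof (intro CollectI conjI)
    show "g \<in> extensional (e ` ?U)" unfolding g_def by simp
    show "inj_on g (e ` ?U)"
    proof (rule inj_onI)
      fix x y assume "x \<in> e ` ?U" "y \<in> e ` ?U" "g x = g y"
      then obtain u v where "u \<in> ?U" "v \<in> ?U" "x = e u" "y = e v" "g (e u) = g (e v)" by blast
      then show "x = y" using ge eq_iff by metis
    qed
    show "is_hom k (quot K e) G g"
      unfolding is_hom_def
    proof (intro conjI allI impI ballI)
      fix i w assume i: "i < k" and w: "w \<in> sorts (quot K e) i"
      then obtain v where v: "v \<in> sorts K i" "w = e v" by auto
      have "v \<in> ?U" using i v unfolding univ_def by auto
      then show "g w \<in> sorts G i" using ge fh i v unfolding is_hom_def by auto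
    next
      fix R t' assume "t' \<in> rels (quot K e) R"
      then obtain t where t: "t \<in> rels K R" "t' = map e t" by auto
      have "map g t' = map f t" using t(2) mg[OF rels_in_univ[OF assms(1,2) t(1)]] by simp
      moreover have "map f t \<in> rels G R" using t(1) fh unfolding is_hom_def by blast
      ultimately show "map g t' \<in> rels G R" by simp
    next
      show "map g (mstruct.dist (quot K e)) = mstruct.dist G"
        using mg[OF dist_in_univ[OF assms(1,2)]] fh unfolding is_hom_def by simp
    qed
  qed
  show "restrict (restrict f (ker k K f ` univ k K) \<circ> ker k K f) (univ k K) = f"
    unfolding e_def[symmetric] g_def[symmetric]
  proof (rule extensionalityI[of _ ?U])
    show "restrict (g \<circ> e) ?U \<in> extensional ?U" by simp
    show "f \<in> extensional ?U" by (rule fext)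
    fix v assume "v \<in> ?U" then show "restrict (g \<circ> e) ?U v = f v" using ge by simp
  qed
qed

lemma reps_finite:
  assumes "ms_finite k K"
  shows "finite (reps k K)"
proof -
  have "reps k K \<subseteq> PiE (univ k K) (\<lambda>_. univ k K)"
  proof
    fix e assume e: "e \<in> reps k K"
    have "e \<in> extensional (univ k K)" using e by (simp add: reps_def)
    moreover have "\<forall>v\<in>univ k K. e v \<in> univ k K" using reps_idem[OF e] by simp
    ultimately show "e \<in> PiE (univ k K) (\<lambda>_. univ k K)" by (simp add: PiE_iff)
  qed
  moreover have "finite (PiE (univ k K) (\<lambda>_. univ k K))"
    by (rule finite_PiE[OF finite_univ[OF assms]]) (rule finite_univ[OF assms])
  ultimately show ?thesis by (rule finite_subset)
qed

lemma hom_decomp: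
  fixes K :: "(nat, 'r) mstruct" and G :: "('b, 'r) mstruct"
  assumes "sig_wf k ty s" "ms_wf k ty s K" "ms_finite k K" "ms_wf k ty s G" "ms_finite k G"
  shows "card (hom_set k K G) = (\<Sum>e\<in>reps k K. card (inj_set k (quot K e) G))"
proof -
  let ?U = "univ k K"
  define \<Phi> :: "(nat \<Rightarrow> nat) \<Rightarrow> (nat \<Rightarrow> 'b) \<Rightarrow> nat \<Rightarrow> 'b" where "\<Phi> = (\<lambda>e g. restrict (g \<circ> e) ?U)"
  have seteq: "hom_set k K G = (\<Union>e\<in>reps k K. \<Phi> e ` inj_set k (quot K e) G)"
  proof
    show "hom_set k K G \<subseteq> (\<Union>e\<in>reps k K. \<Phi> e ` inj_set k (quot K e) G)"
    proof
      fix f assume f: "f \<in> hom_set k K G"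
      note d = decomp_surj[OF assms(1,2,4) f]
      have "f = \<Phi> (ker k K f) (restrict f (ker k K f ` univ k K))" using d(3) unfolding \<Phi>_def by simp
      then show "f \<in> (\<Union>e\<in>reps k K. \<Phi> e ` inj_set k (quot K e) G)" using d(1,2) by blast
    qed
    show "(\<Union>e\<in>reps k K. \<Phi> e ` inj_set k (quot K e) G) \<subseteq> hom_set k K G"
    proof (rule UN_least, rule image_subsetI)
      fix e g assume e: "e \<in> reps k K" and g: "g \<in> inj_set k (quot K e) G"
      have "is_hom k K G (\<Phi> e g)" unfolding \<Phi>_def
        using comp_hom[OF assms(1,2) hom_to_quot] g unfolding inj_set_def by blast
      then show "\<Phi> e g \<in> hom_set k K G" unfolding hom_set_def \<Phi>_def by simp
    qed
  qed
  have "card (\<Union>e\<in>reps k K. \<Phi> e ` inj_set k (quot K e) G) = (\<Sum>e\<in>reps k K. card (\<Phi> e ` inj_set k (quot K e) G))"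
  proof (rule card_UN_disjoint)
    show "finite (reps k K)" by (rule reps_finite[OF assms(3)])
    show "\<forall>e\<in>reps k K. finite (\<Phi> e ` inj_set k (quot K e) G)"
      using inj_set_finite[OF quot_finite[OF assms(3)] assms(5)] by (intro ballI finite_imageI)
    show "\<forall>e\<in>reps k K. \<forall>e'\<in>reps k K. e \<noteq> e' \<longrightarrow> \<Phi> e ` inj_set k (quot K e) G \<inter> \<Phi> e' ` inj_set k (quot K e') G = {}"
    proof (intro ballI impI)
      fix e e' assume e: "e \<in> reps k K" and e': "e' \<in> reps k K" and ne: "e \<noteq> e'"
      show "\<Phi> e ` inj_set k (quot K e) G \<inter> \<Phi> e' ` inj_set k (quot K e') G = {}"
      proof (rule ccontr)
        assume "\<not> ?thesis"
        then obtain g g' where g: "g \<in> inj_set k (quot K e) G" and g': "g' \<in> inj_set k (quot K e') G"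
          and eq: "\<Phi> e g = \<Phi> e' g'" by blast
        have "e = ker k K (\<Phi> e g)" using decomp_kernel(1)[OF e g] unfolding \<Phi>_def by simp
        also have "\<dots> = e'" using eq decomp_kernel(1)[OF e' g'] unfolding \<Phi>_def by simp
        finally show False using ne by simp
      qed
    qed
  qed
  also have "\<dots> = (\<Sum>e\<in>reps k K. card (inj_set k (quot K e) G))"
  proof (rule sum.cong[OF refl])
    fix e assume e: "e \<in> reps k K"
    have "inj_on (\<Phi> e) (inj_set k (quot K e) G)"
    proof (rule inj_onI)
      fix g g' assume g: "g \<in> inj_set k (quot K e) G" and g': "g' \<in> inj_set k (quot K e) G"
        and eq: "\<Phi> e g = \<Phi> e g'"
      have "g = restrict (\<Phi> e g) (e ` ?U)" using decomp_kernel(2)[OF e g] unfolding \<Phi>_def by simp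
      also have "\<dots> = g'" using eq decomp_kernel(2)[OF e g'] unfolding \<Phi>_def by simp
      finally show "g = g'" .
    qed
    then show "card (\<Phi> e ` inj_set k (quot K e) G) = card (inj_set k (quot K e) G)" by (rule card_image)
  qed
  finally show ?thesis using seteq by simp
qed

lemma inj_cong:
  fixes G :: "('a, 'r) mstruct" and H :: "('b, 'r) mstruct" and K :: "(nat, 'r) mstruct"
  assumes "sig_wf k ty s" "ms_wf k ty s G" "ms_finite k G" "ms_wf k ty s H" "ms_finite k H"
    and hyp: "\<forall>K :: (nat, 'r) mstruct. ms_wf k ty s K \<and> ms_finite k K \<longrightarrow>
        hom_count k K G mod p = hom_count k K H mod p"
  shows "ms_wf k ty s K \<Longrightarrow> ms_finite k K \<Longrightarrow> [card (inj_set k K G) = card (inj_set k K H)] (mod p)"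
proof (induction "card (univ k K)" arbitrary: K rule: less_induct)
  case less
  let ?id = "restrict id (univ k K)"
  let ?R = "reps k K - {?id}"
  have idr: "?id \<in> reps k K" by (rule id_reps)
  have fin: "finite (reps k K)" by (rule reps_finite[OF less.prems(2)])
  have split: "(\<Sum>e\<in>reps k K. card (inj_set k (quot K e) X)) =
      card (inj_set k K X) + (\<Sum>e\<in>?R. card (inj_set k (quot K e) X))" for X :: "('c, 'r) mstruct"
    using sum.remove[OF fin idr, of "\<lambda>e. card (inj_set k (quot K e) X)"]
      inj_set_quot_id[OF assms(1) less.prems(1), of X] by simp
  have hG: "card (hom_set k K G) = card (inj_set k K G) + (\<Sum>e\<in>?R. card (inj_set k (quot K e) G))"
    using hom_decomp[OF assms(1) less.prems assms(2,3)] split by simp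
  have hH: "card (hom_set k K H) = card (inj_set k K H) + (\<Sum>e\<in>?R. card (inj_set k (quot K e) H))"
    using hom_decomp[OF assms(1) less.prems assms(4,5)] split by simp
  have sums: "[(\<Sum>e\<in>?R. card (inj_set k (quot K e) G)) = (\<Sum>e\<in>?R. card (inj_set k (quot K e) H))] (mod p)"
  proof (rule cong_sum)
    fix e assume e: "e \<in> ?R"
    have er: "e \<in> reps k K" and ne: "e \<noteq> ?id" using e by auto
    have "card (univ k (quot K e)) < card (univ k K)" by (rule quot_smaller[OF less.prems(2) er ne])
    then show "[card (inj_set k (quot K e) G) = card (inj_set k (quot K e) H)] (mod p)"
      by (rule less.hyps[OF _ quot_wf[OF less.prems(1) er] quot_finite[OF less.prems(2)]])
  qed
  have "hom_count k K G mod p = hom_count k K H mod p"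
    using hyp less.prems by blast
  then have c1: "[card (hom_set k K G) = card (hom_set k K H)] (mod p)"
    unfolding cong_def hom_count_def hom_set_def .
  have c1': "[card (inj_set k K G) + (\<Sum>e\<in>?R. card (inj_set k (quot K e) G)) =
      card (inj_set k K H) + (\<Sum>e\<in>?R. card (inj_set k (quot K e) H))] (mod p)"
    using c1 unfolding hG hH .
  have c2: "[card (inj_set k K H) + (\<Sum>e\<in>?R. card (inj_set k (quot K e) H)) =
      card (inj_set k K H) + (\<Sum>e\<in>?R. card (inj_set k (quot K e) G))] (mod p)"
    by (rule cong_add[OF cong_refl cong_sym[OF sums]])
  have "[card (inj_set k K G) + (\<Sum>e\<in>?R. card (inj_set k (quot K e) G)) =
      card (inj_set k K H) + (\<Sum>e\<in>?R. card (inj_set k (quot K e) G))] (mod p)"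
    by (rule cong_trans[OF c1' c2])
  then show ?case by (simp only: cong_add_rcancel_nat)
qed

lemma bij_mult: "a \<in> Bij S \<Longrightarrow> b \<in> Bij S \<Longrightarrow> a \<otimes>\<^bsub>BijGroup S\<lparr>carrier := H\<rparr>\<^esub> b = compose S a b"
  by (simp add: BijGroup_def)

lemma bij_mult0: "a \<in> Bij S \<Longrightarrow> b \<in> Bij S \<Longrightarrow> a \<otimes>\<^bsub>BijGroup S\<^esub> b = compose S a b"
  by (simp add: BijGroup_def)

lemma bij_one: "\<one>\<^bsub>BijGroup S\<lparr>carrier := H\<rparr>\<^esub> = (\<lambda>v\<in>S. v)"
  by (simp add: BijGroup_def)

lemma bij_pow:
  assumes grp: "group (BijGroup S\<lparr>carrier := H\<rparr>)" and HB: "H \<subseteq> Bij S" and x: "x \<in> H"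
  shows "x [^]\<^bsub>BijGroup S\<lparr>carrier := H\<rparr>\<^esub> (n::nat) = (\<lambda>v\<in>S. (x ^^ n) v)"
proof (induction n)
  case 0
  have "x [^]\<^bsub>BijGroup S\<lparr>carrier := H\<rparr>\<^esub> (0::nat) = \<one>\<^bsub>BijGroup S\<lparr>carrier := H\<rparr>\<^esub>"
    by (rule monoid.nat_pow_0[OF group.is_monoid[OF grp]])
  then show ?case by (simp add: BijGroup_def)
next
  case (Suc n)
  let ?M = "BijGroup S\<lparr>carrier := H\<rparr>"
  have m: "monoid ?M" by (rule group.is_monoid[OF grp])
  have cl: "x [^]\<^bsub>?M\<^esub> n \<in> H" using monoid.nat_pow_closed[OF m, of x n] x by simp
  have "x [^]\<^bsub>?M\<^esub> Suc n = x [^]\<^bsub>?M\<^esub> n \<otimes>\<^bsub>?M\<^esub> x"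
    by (rule monoid.nat_pow_Suc[OF m])
  also have "\<dots> = compose S (x [^]\<^bsub>?M\<^esub> n) x"
  proof -
    have "x [^]\<^bsub>?M\<^esub> n \<in> Bij S" "x \<in> Bij S" using cl x HB by auto
    then show ?thesis by (rule bij_mult)
  qed
  also have "\<dots> = (\<lambda>v\<in>S. (x ^^ Suc n) v)"
    unfolding Suc compose_def
  proof (rule restrict_ext)
    fix v assume v: "v \<in> S"
    have "x v \<in> S" using x HB v Bij_imp_funcset by blast
    moreover have "(x ^^ Suc n) v = (x ^^ n) (x v)" by (simp only: funpow_Suc_right comp_apply)
    ultimately show "restrict (x ^^ n) S (x v) = (x ^^ Suc n) v"
      by (simp only: restrict_apply'[OF \<open>x v \<in> S\<close>])
  qed
  finally show ?case .
qed

lemma id_in_inj_set: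
  assumes "sig_wf k ty s" "ms_wf k ty s G"
  shows "restrict id (univ k G) \<in> inj_set k G G"
proof -
  have "is_hom k G G (restrict id (univ k G))"
    unfolding is_hom_def
  proof (intro conjI allI impI ballI)
    fix i v assume "i < k" "v \<in> sorts G i"
    then show "restrict id (univ k G) v \<in> sorts G i" unfolding univ_def by auto
  next
    fix R t assume "t \<in> rels G R"
    moreover have "map (restrict id (univ k G)) t = t"
      using rels_in_univ[OF assms \<open>t \<in> rels G R\<close>] by (auto intro!: map_idI)
    ultimately show "map (restrict id (univ k G)) t \<in> rels G R" by simp
  next
    show "map (restrict id (univ k G)) (mstruct.dist G) = mstruct.dist G"
      using dist_in_univ[OF assms] by (auto intro!: map_idI)
  qed
  then show ?thesis unfolding inj_set_def by (simp add: inj_on_def)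
qed

lemma rigid_not_dvd:
  fixes G :: "('a, 'r) mstruct"
  assumes p: "prime p" and sw: "sig_wf k ty s" and wf: "ms_wf k ty s G" and fin: "ms_finite k G"
    and rig: "p_rigid p k G"
  shows "\<not> p dvd card (inj_set k G G)"
proof
  assume dvd: "p dvd card (inj_set k G G)"
  let ?U = "univ k G"
  let ?Aut = "inj_set k G G"
  have isiso: "Defs.is_iso k G G f" if "f \<in> ?Aut" for f
    using that both_inj_iso[OF sw wf wf fin fin] unfolding inj_set_def by blast
  have AB: "?Aut \<subseteq> Bij ?U"
  proof
    fix f assume f: "f \<in> ?Aut"
    have "inj_on f ?U" "f ` ?U = ?U" using f iso_image_univ[OF isiso[OF f]] unfolding inj_set_def by auto
    then show "f \<in> Bij ?U" using f unfolding Bij_def inj_set_def bij_betw_def by auto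
  qed
  have comp_in: "restrict (a \<circ> b) ?U \<in> ?Aut" if a: "a \<in> ?Aut" and b: "b \<in> ?Aut" for a b
  proof -
    have "is_hom k G G (restrict (a \<circ> b) ?U)"
      using comp_hom[OF sw wf] a b unfolding inj_set_def by blast
    moreover have "inj_on (restrict (a \<circ> b) ?U) ?U"
    proof (rule comp_inj)
      show "inj_on b ?U" "inj_on a ?U" using a b unfolding inj_set_def by auto
      show "b ` ?U \<subseteq> ?U" using b hom_univ unfolding inj_set_def by auto
    qed
    ultimately show ?thesis unfolding inj_set_def by simp
  qed
  have inv_in: "(\<lambda>w\<in>?U. inv_into ?U f w) \<in> ?Aut" if f: "f \<in> ?Aut" for f
  proof -
    have i: "Defs.is_iso k G G (\<lambda>w\<in>?U. inv_into ?U f w)" by (rule iso_inv[OF sw wf wf isiso[OF f]])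
    show ?thesis unfolding inj_set_def using iso_hom[OF sw wf i] iso_inj_univ[OF wf i] by simp
  qed
  have sub: "subgroup ?Aut (BijGroup ?U)"
  proof (rule group.subgroupI[OF group_BijGroup])
    show "?Aut \<subseteq> carrier (BijGroup ?U)" using AB by (simp add: BijGroup_def)
    show "?Aut \<noteq> {}" using id_in_inj_set[OF sw wf] by blast
    fix a assume a: "a \<in> ?Aut"
    show "inv\<^bsub>BijGroup ?U\<^esub> a \<in> ?Aut" using inv_BijGroup[of a ?U] a AB inv_in[OF a] by auto
  next
    fix a b assume a: "a \<in> ?Aut" and b: "b \<in> ?Aut"
    have "a \<in> Bij ?U" "b \<in> Bij ?U" using a b AB by auto
    then have "a \<otimes>\<^bsub>BijGroup ?U\<^esub> b = compose ?U a b" by (rule bij_mult0)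
    also have "\<dots> = restrict (a \<circ> b) ?U" unfolding compose_def by (simp add: restrict_def comp_def)
    finally show "a \<otimes>\<^bsub>BijGroup ?U\<^esub> b \<in> ?Aut" using comp_in[OF a b] by simp
  qed
  let ?A = "BijGroup ?U\<lparr>carrier := ?Aut\<rparr>"
  have gA: "group ?A" by (rule subgroup.subgroup_is_group[OF sub group_BijGroup])
  have finA: "finite (carrier ?A)" using inj_set_finite[OF fin fin] by simp
  obtain m where m: "order ?A = p ^ 1 * m" using dvd unfolding order_def by auto
  obtain H where H: "subgroup H ?A" "card H = p ^ 1" using sylow_thm[OF p gA m finA] by blast
  have gH: "group (?A\<lparr>carrier := H\<rparr>)" by (rule subgroup.subgroup_is_group[OF H(1) gA])
  have HA: "H \<subseteq> ?Aut" using subgroup.subset[OF H(1)] by simp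
  have gH': "group (BijGroup ?U\<lparr>carrier := H\<rparr>)" using gH by simp
  have p2: "p \<ge> 2" using p by (simp add: prime_ge_2_nat)
  have "\<exists>x\<in>H. x \<noteq> (\<lambda>v\<in>?U. v)"
  proof (rule ccontr)
    assume "\<not> ?thesis"
    then have "H \<subseteq> {\<lambda>v\<in>?U. v}" by auto
    then have "card H \<le> card {\<lambda>v\<in>?U. v}" by (rule card_mono[rotated]) simp
    then have "card H \<le> 1" by simp
    then show False using H(2) p2 by simp
  qed
  then obtain x where x: "x \<in> H" "x \<noteq> (\<lambda>v\<in>?U. v)" by blast
  have xA: "x \<in> ?Aut" using x HA by blast
  have "x [^]\<^bsub>BijGroup ?U\<lparr>carrier := H\<rparr>\<^esub> order (BijGroup ?U\<lparr>carrier := H\<rparr>) = \<one>\<^bsub>BijGroup ?U\<lparr>carrier := H\<rparr>\<^esub>"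
    by (rule group.pow_order_eq_1[OF gH']) (use x in simp)
  moreover have "order (BijGroup ?U\<lparr>carrier := H\<rparr>) = p" using H(2) by (simp add: order_def)
  moreover have "H \<subseteq> Bij ?U" using HA AB by blast
  ultimately have "(\<lambda>v\<in>?U. (x ^^ p) v) = (\<lambda>v\<in>?U. v)"
    using bij_pow[OF gH' _ x(1), of p] bij_one[where S="?U" and H=H] by simp
  then have pw: "(x ^^ p) v = v" if "v \<in> ?U" for v using that by (metis restrict_apply')
  have "\<exists>v\<in>?U. x v \<noteq> v"
  proof (rule ccontr)
    assume "\<not> ?thesis"
    then have "x = (\<lambda>v\<in>?U. v)" using xA unfolding inj_set_def by (intro extensionalityI[of _ ?U]) auto
    then show False using x(2) by simp
  qed
  then obtain i v where iv: "i < k" "v \<in> sorts G i" "x v \<noteq> v" unfolding univ_def by auto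
  have "\<forall>i<k. \<forall>v\<in>sorts G i. (x ^^ p) v = v" using pw unfolding univ_def by auto
  then show False using rig isiso[OF xA] iv unfolding p_rigid_def by blast
qed

lemma exists_inj:
  fixes G :: "('a, 'r) mstruct" and H :: "('b, 'r) mstruct"
  assumes p: "prime p" and sw: "sig_wf k ty s"
    and G: "ms_wf k ty s G" "ms_finite k G" "p_rigid p k G"
    and H: "ms_wf k ty s H" "ms_finite k H"
    and cong: "\<And>K :: (nat, 'r) mstruct. ms_wf k ty s K \<Longrightarrow> ms_finite k K \<Longrightarrow>
        [card (inj_set k K G) = card (inj_set k K H)] (mod p)"
  shows "\<exists>f. is_hom k G H f \<and> inj_on f (univ k G)"
proof -
  obtain G' :: "(nat, 'r) mstruct" and \<phi> where G': "ms_wf k ty s G'" "ms_finite k G'" "Defs.is_iso k G' G \<phi>"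
    using nat_copy[OF sw G(1,2)] by blast
  have "card (inj_set k G' G) = card (inj_set k G G)" by (rule iso_inj_count_eq[OF sw G'(1) G(1) G'(2) G(2) G(2) G'(3)])
  moreover have "card (inj_set k G' H) = card (inj_set k G H)" by (rule iso_inj_count_eq[OF sw G'(1) G(1) G'(2) G(2) H(2) G'(3)])
  ultimately have c: "[card (inj_set k G G) = card (inj_set k G H)] (mod p)" using cong[OF G'(1,2)] by simp
  have nd: "\<not> p dvd card (inj_set k G G)" by (rule rigid_not_dvd[OF p sw G])
  have "\<not> p dvd card (inj_set k G H)"
    using nd c unfolding cong_def by (simp add: dvd_eq_mod_eq_0)
  then have "card (inj_set k G H) \<noteq> 0" by (metis dvd_0_right)
  then have "inj_set k G H \<noteq> {}" by auto
  then show ?thesis unfolding inj_set_def by blast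
qed

theorem lemmaA3:
  fixes p k :: nat and ty :: "'r \<Rightarrow> nat list" and s :: "nat list"
    and G :: "('a, 'r) mstruct" and H :: "('b, 'r) mstruct"
  assumes "prime p"
    and "sig_wf k ty s"
    and "ms_wf k ty s G" and "ms_finite k G" and "p_rigid p k G"
    and "ms_wf k ty s H" and "ms_finite k H" and "p_rigid p k H"
  shows "ms_iso k G H \<longleftrightarrow>
    (\<forall>K :: (nat, 'r) mstruct. ms_wf k ty s K \<and> ms_finite k K \<longrightarrow>
        hom_count k K G mod p = hom_count k K H mod p)"
proof
  assume "ms_iso k G H"
  then obtain \<phi> where phi: "Defs.is_iso k G H \<phi>" unfolding ms_iso_def by blast
  show "\<forall>K :: (nat, 'r) mstruct. ms_wf k ty s K \<and> ms_finite k K \<longrightarrow>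
        hom_count k K G mod p = hom_count k K H mod p"
  proof (intro allI impI)
    fix K :: "(nat, 'r) mstruct" assume K: "ms_wf k ty s K \<and> ms_finite k K"
    have "hom_count k K G = hom_count k K H"
      using iso_hom_count_eq[OF assms(2) _ _ assms(3,6,4,7) phi] K by blast
    then show "hom_count k K G mod p = hom_count k K H mod p" by simp
  qed
next
  assume hyp: "\<forall>K :: (nat, 'r) mstruct. ms_wf k ty s K \<and> ms_finite k K \<longrightarrow>
        hom_count k K G mod p = hom_count k K H mod p"
  have cGH: "[card (inj_set k K G) = card (inj_set k K H)] (mod p)"
    if "ms_wf k ty s K" "ms_finite k K" for K :: "(nat, 'r) mstruct"
    by (rule inj_cong[OF assms(2,3,4,6,7) hyp that])
  have hyp': "\<forall>K :: (nat, 'r) mstruct. ms_wf k ty s K \<and> ms_finite k K \<longrightarrow>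
        hom_count k K H mod p = hom_count k K G mod p" using hyp by simp
  have cHG: "[card (inj_set k K H) = card (inj_set k K G)] (mod p)"
    if "ms_wf k ty s K" "ms_finite k K" for K :: "(nat, 'r) mstruct"
    by (rule inj_cong[OF assms(2,6,7,3,4) hyp' that])
  obtain f where f: "is_hom k G H f" "inj_on f (univ k G)"
    using exists_inj[OF assms(1,2,3,4,5,6,7) cGH] by blast
  obtain g where g: "is_hom k H G g" "inj_on g (univ k H)"
    using exists_inj[OF assms(1,2,6,7,8,3,4) cHG] by blast
  have "Defs.is_iso k G H f" by (rule both_inj_iso[OF assms(2,3,6,4,7) f g])
  then show "ms_iso k G H" unfolding ms_iso_def by blast
qed

end
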